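(* For every $(w_1,w_2)\in\mathcal A$, with $c_i=c_i(w_1,w_2)$, $$e^{c_i}\int_\Omega e^{u_i^0+w_i}\,dx\le|\Omega|\quad\text{and}\quad e^{c_i}\le1,\qquad i=1,2.$$
   Context: Standing setting (doubly periodic case): $N\ge2$ integer, $\kappa>1$, $\lambda>0$; $\Omega$ a doubly periodic domain (flat torus) of area $|\Omega|$; integers $n_1,n_2\ge0$ and points $p_{is}\in\Omega$. $\dot W^{1,2}(\Omega)=\{w\in W^{1,2}(\Omega):\int_\Omega w=0\}$ (periodic functions). $u_i^0$ solves $\Delta u_i^0=4\pi\sum_{s=1}^{n_i}\delta_{p_{is}}-\frac{4\pi n_i}{|\Omega|}$, $\int_\Omega u_i^0=0$. $b_1=\frac{4\pi((1+(N-1)\kappa)n_1+(\kappa-1)n_2)}{\kappa}$, $b_2=\frac{4\pi((N-1)(\kappa-1)n_1+(N-1+\kappa)n_2)}{(N-1)\kappa}$. $\mathcal A$ is the set of $(w_1,w_2)\in\dot W^{1,2}(\Omega)^2$ with $(\int_\Omega e^{u_1^0+w_1})^2\ge\frac{4(N-1+\kappa)b_1}{N^2\lambda}\int_\Omega e^{2u_1^0+2w_1}$ and $(\int_\Omega e^{u_2^0+w_2})^2\ge\frac{4(N-1)(1+(N-1)\kappa)b_2}{N^2\lambda}\int_\Omega e^{2u_2^0+2w_2}$. For $(w_1,w_2)\in\mathcal A$, $(c_1(w_1,w_2),c_2(w_1,w_2))$ is the unique pair of reals such that $e^{c_1}=f_1(e^{c_2})$, $e^{c_2}=f_2(e^{c_1})$,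 where with $E_{12}=\int_\Omega e^{u_1^0+u_2^0+w_1+w_2}$, $P_1(Y)=N\int_\Omega e^{u_1^0+w_1}+(\kappa-1)YE_{12}$, $P_2(X)=\frac N{N-1}\int_\Omega e^{u_2^0+w_2}+(\kappa-1)XE_{12}$, $f_1(Y)=\frac{P_1(Y)+\sqrt{P_1(Y)^2-\frac{4(N-1+\kappa)b_1}{\lambda}\int e^{2u_1^0+2w_1}}}{2(N-1+\kappa)\int e^{2u_1^0+2w_1}}$, $f_2(X)=\frac{P_2(X)+\sqrt{P_2(X)^2-\frac{4(1+(N-1)\kappa)b_2}{(N-1)\lambda}\int e^{2u_2^0+2w_2}}}{2(\frac1{N-1}+\kappa)\int e^{2u_2^0+2w_2}}$ (this pair exists and is unique). *)

theory Defs
  imports "HOL-Analysis.Analysis"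
begin

text \<open>The flat torus is modelled as the plane modulo the lattice generated by two
linearly independent vectors om1 om2; functions on the torus are lattice-periodic
functions on the plane, and integrals over the torus are Lebesgue integrals over
the fundamental parallelogram.\<close>

definition lattice_basis :: "real \<times> real \<Rightarrow> real \<times> real \<Rightarrow> bool" where
  "lattice_basis om1 om2 \<longleftrightarrow> fst om1 * snd om2 - snd om1 * fst om2 \<noteq> 0"

definition periodic2 :: "real \<times> real \<Rightarrow> real \<times> real \<Rightarrow> (real \<times> real \<Rightarrow> 'b) \<Rightarrow> bool" where
  "periodic2 om1 om2 f \<longleftrightarrow> (\<forall>x. f (x + om1) = f x \<and> f (x + om2) = f x)"

definition fund_dom :: "real \<times> real \<Rightarrow> real \<times> real \<Rightarrow> (real \<times> real) set" where
  "fund_dom om1 om2 = {s *\<^sub>R om1 + t *\<^sub>R om2 | s t. 0 \<le> s \<and> s < 1 \<and> 0 \<le> t \<and> t < 1}"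

definition tint :: "real \<times> real \<Rightarrow> real \<times> real \<Rightarrow> (real \<times> real \<Rightarrow> real) \<Rightarrow> real" where
  "tint om1 om2 f = integral\<^sup>L (lebesgue_on (fund_dom om1 om2)) f"

definition tarea :: "real \<times> real \<Rightarrow> real \<times> real \<Rightarrow> real" where
  "tarea om1 om2 = measure lebesgue (fund_dom om1 om2)"

definition tL1 :: "real \<times> real \<Rightarrow> real \<times> real \<Rightarrow> (real \<times> real \<Rightarrow> real) \<Rightarrow> bool" where
  "tL1 om1 om2 f \<longleftrightarrow> integrable (lebesgue_on (fund_dom om1 om2)) f"

definition tL2 :: "real \<times> real \<Rightarrow> real \<times> real \<Rightarrow> (real \<times> real \<Rightarrow> real) \<Rightarrow> bool" where
  "tL2 om1 om2 f \<longleftrightarrow> f \<in> borel_measurable (lebesgue_on (fund_dom om1 om2)) \<and>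
     integrable (lebesgue_on (fund_dom om1 om2)) (\<lambda>x. (f x)\<^sup>2)"

text \<open>Partial derivatives (True = first coordinate, False = second coordinate).\<close>
definition pd :: "bool \<Rightarrow> (real \<times> real \<Rightarrow> real) \<Rightarrow> real \<times> real \<Rightarrow> real" where
  "pd d f z = (if d then deriv (\<lambda>t. f (t, snd z)) (fst z) else deriv (\<lambda>t. f (fst z, t)) (snd z))"

fun iter_pd :: "bool list \<Rightarrow> (real \<times> real \<Rightarrow> real) \<Rightarrow> real \<times> real \<Rightarrow> real" where
  "iter_pd [] f = f"
| "iter_pd (d # ds) f = pd d (iter_pd ds f)"

definition smooth2 :: "(real \<times> real \<Rightarrow> real) \<Rightarrow> bool" where
  "smooth2 f \<longleftrightarrow> (\<forall>ds. continuous_on UNIV (iter_pd ds f) \<and>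
      (\<forall>z. (\<lambda>t. iter_pd ds f (t, snd z)) differentiable (at (fst z)) \<and>
           (\<lambda>t. iter_pd ds f (fst z, t)) differentiable (at (snd z))))"

definition laplacian :: "(real \<times> real \<Rightarrow> real) \<Rightarrow> real \<times> real \<Rightarrow> real" where
  "laplacian f z = pd True (pd True f) z + pd False (pd False f) z"

definition test_fun :: "real \<times> real \<Rightarrow> real \<times> real \<Rightarrow> (real \<times> real \<Rightarrow> real) \<Rightarrow> bool" where
  "test_fun om1 om2 \<phi> \<longleftrightarrow> smooth2 \<phi> \<and> periodic2 om1 om2 \<phi>"

definition W12 :: "real \<times> real \<Rightarrow> real \<times> real \<Rightarrow> (real \<times> real \<Rightarrow> real) \<Rightarrow> bool" where
  "W12 om1 om2 w \<longleftrightarrow> periodic2 om1 om2 w \<and> tL2 om1 om2 w \<and>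
     (\<exists>g1 g2. periodic2 om1 om2 g1 \<and> periodic2 om1 om2 g2 \<and> tL2 om1 om2 g1 \<and> tL2 om1 om2 g2 \<and>
        (\<forall>\<phi>. test_fun om1 om2 \<phi> \<longrightarrow>
           tint om1 om2 (\<lambda>x. w x * pd True \<phi> x) = - tint om1 om2 (\<lambda>x. g1 x * \<phi> x) \<and>
           tint om1 om2 (\<lambda>x. w x * pd False \<phi> x) = - tint om1 om2 (\<lambda>x. g2 x * \<phi> x)))"

definition dotW12 :: "real \<times> real \<Rightarrow> real \<times> real \<Rightarrow> (real \<times> real \<Rightarrow> real) \<Rightarrow> bool" where
  "dotW12 om1 om2 w \<longleftrightarrow> W12 om1 om2 w \<and> tint om1 om2 w = 0"

text \<open>u is the mean-zero distributional solution on the torus of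
  Delta u = 4 pi sum_{s=1}^n delta_{p s} - 4 pi n / |Omega|.\<close>
definition vortex_potential :: "real \<times> real \<Rightarrow> real \<times> real \<Rightarrow> nat \<Rightarrow> (nat \<Rightarrow> real \<times> real)
    \<Rightarrow> (real \<times> real \<Rightarrow> real) \<Rightarrow> bool" where
  "vortex_potential om1 om2 n p u \<longleftrightarrow> periodic2 om1 om2 u \<and> tL1 om1 om2 u \<and>
     tint om1 om2 u = 0 \<and>
     (\<forall>\<phi>. test_fun om1 om2 \<phi> \<longrightarrow>
        tint om1 om2 (\<lambda>x. u x * laplacian \<phi> x) =
          4 * pi * (\<Sum>s\<in>{1..n}. \<phi> (p s)) - 4 * pi * real n / tarea om1 om2 * tint om1 om2 \<phi>)"

definition bb1 :: "nat \<Rightarrow> real \<Rightarrow> nat \<Rightarrow> nat \<Rightarrow> real" where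
  "bb1 N \<kappa> n1 n2 = 4 * pi * ((1 + (real N - 1) * \<kappa>) * real n1 + (\<kappa> - 1) * real n2) / \<kappa>"

definition bb2 :: "nat \<Rightarrow> real \<Rightarrow> nat \<Rightarrow> nat \<Rightarrow> real" where
  "bb2 N \<kappa> n1 n2 = 4 * pi * ((real N - 1) * (\<kappa> - 1) * real n1 + (real N - 1 + \<kappa>) * real n2)
      / ((real N - 1) * \<kappa>)"

text \<open>f1 and f2 in terms of I_i = int e^{u_i^0+w_i}, J_i = int e^{2u_i^0+2w_i}, E = E_12.\<close>
definition ff1 :: "nat \<Rightarrow> real \<Rightarrow> real \<Rightarrow> real \<Rightarrow> real \<Rightarrow> real \<Rightarrow> real \<Rightarrow> real \<Rightarrow> real" where
  "ff1 N \<kappa> lam b I J E Y =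
     (let P = real N * I + (\<kappa> - 1) * Y * E
      in (P + sqrt (P\<^sup>2 - 4 * (real N - 1 + \<kappa>) * b / lam * J)) / (2 * (real N - 1 + \<kappa>) * J))"

definition ff2 :: "nat \<Rightarrow> real \<Rightarrow> real \<Rightarrow> real \<Rightarrow> real \<Rightarrow> real \<Rightarrow> real \<Rightarrow> real \<Rightarrow> real" where
  "ff2 N \<kappa> lam b I J E X =
     (let P = real N / (real N - 1) * I + (\<kappa> - 1) * X * E
      in (P + sqrt (P\<^sup>2 - 4 * (1 + (real N - 1) * \<kappa>) * b / ((real N - 1) * lam) * J))
           / (2 * (1 / (real N - 1) + \<kappa>) * J))"

end

theory Submission
  imports Defs
begin


lemma lin_core:
  fixes n k P Q :: real
  assumes n: "n \<ge> 1" and k: "k > 1"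
    and h1: "(n+k)*P \<le> (k-1)*Q" and h2: "(1+n*k)*Q \<le> n*(k-1)*P"
  shows "P \<le> 0 \<and> Q \<le> 0"
proof -
  have P: "P \<le> 0"
  proof (rule ccontr)
    assume "\<not> P \<le> 0" hence Pp: "P > 0" by simp
    have "(n+k)*P > 0" using Pp n k by simp
    hence "(k-1)*Q > 0" using h1 by linarith
    hence Qp: "Q > 0" using k by (simp add: zero_less_mult_iff)
    have "(1+n*k)*(n+k)*P*Q \<le> n*(k-1)*P*((n+k)*P)"
      using mult_right_mono[OF h2, of "(n+k)*P"] Pp n k by (simp add: algebra_simps)
    also have "\<dots> \<le> n*(k-1)*P*((k-1)*Q)"
      using mult_left_mono[OF h1, of "n*(k-1)*P"] Pp n k by simp
    finally have "(1+n*k)*(n+k)*(P*Q) \<le> n*(k-1)*(k-1)*(P*Q)" by (simp add: algebra_simps)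
    hence le: "(1+n*k)*(n+k) \<le> n*(k-1)*(k-1)" using Pp Qp by simp
    have "0 < k + n*n*k + 2*n*k" using n k by (simp add: add_pos_pos)
    moreover have "(1+n*k)*(n+k) - n*(k-1)*(k-1) = k + n*n*k + 2*n*k" by (simp add: algebra_simps)
    ultimately show False using le by linarith
  qed
  have "n*(k-1)*P \<le> 0" using P n k by (simp add: mult_nonneg_nonpos)
  hence "(1+n*k)*Q \<le> 0" using h2 by simp
  moreover have "1+n*k > 0" using n k by (simp add: add_pos_pos)
  ultimately have "Q \<le> 0" by (simp add: mult_le_0_iff)
  with P show ?thesis by simp
qed



lemma alg_main:
  fixes n k X Y J1 J2 A I1 I2 E :: real
  assumes n: "n \<ge> 1" and k: "k > 1" and X: "X > 0" and Y: "Y > 0"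
    and J1: "J1 > 0" and J2: "J2 > 0" and A: "A \<ge> 0"
    and I1: "I1 \<ge> 0" and I2: "I2 \<ge> 0" and E: "E \<ge> 0"
    and H1: "(n+k)*J1*X \<le> (n+1)*I1 + (k-1)*Y*E"
    and H2: "(1+n*k)*J2*Y \<le> (n+1)*I2 + n*(k-1)*X*E"
    and C1: "I1\<^sup>2 \<le> J1*A" and C2: "I2\<^sup>2 \<le> J2*A" and CE: "E\<^sup>2 \<le> J1*J2"
    and A1: "A \<le> J1" and A2: "A \<le> J2"
  shows "X * I1 \<le> A \<and> X \<le> 1 \<and> Y * I2 \<le> A \<and> Y \<le> 1"
proof -
  define r1 where "r1 = sqrt J1"
  define r2 where "r2 = sqrt J2"
  define S where "S = sqrt A"
  have r1: "r1 > 0" "r1 * r1 = J1" using J1 by (auto simp: r1_def)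
  have r2: "r2 > 0" "r2 * r2 = J2" using J2 by (auto simp: r2_def)
  have S: "S \<ge> 0" "S * S = A" using A by (auto simp: S_def)
  have i1: "I1 \<le> r1 * S"
    using real_sqrt_le_mono[OF C1] I1 by (simp add: r1_def S_def real_sqrt_mult)
  have i2: "I2 \<le> r2 * S"
    using real_sqrt_le_mono[OF C2] I2 by (simp add: r2_def S_def real_sqrt_mult)
  have e: "E \<le> r1 * r2"
    using real_sqrt_le_mono[OF CE] E by (simp add: r1_def r2_def real_sqrt_mult)
  define p where "p = X * r1"
  define q where "q = Y * r2"
  have "(n+k)*p*r1 \<le> (n+1)*S*r1 + (k-1)*q*r1"
  proof -
    have "(n+k)*p*r1 = (n+k)*J1*X" using r1 by (simp add: p_def algebra_simps)
    also have "\<dots> \<le> (n+1)*I1 + (k-1)*Y*E" by (rule H1)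
    also have "\<dots> \<le> (n+1)*(r1*S) + (k-1)*Y*(r1*r2)"
      using i1 e n k Y by (intro add_mono mult_left_mono) auto
    finally show ?thesis by (simp add: q_def algebra_simps)
  qed
  hence "((n+k)*(p-S))*r1 \<le> ((k-1)*(q-S))*r1" by (simp add: algebra_simps)
  hence h1: "(n+k)*(p-S) \<le> (k-1)*(q-S)" using r1 mult_le_cancel_right_pos by blast
  have "(1+n*k)*q*r2 \<le> (n+1)*S*r2 + n*(k-1)*p*r2"
  proof -
    have "(1+n*k)*q*r2 = (1+n*k)*J2*Y" using r2 by (simp add: q_def algebra_simps)
    also have "\<dots> \<le> (n+1)*I2 + n*(k-1)*X*E" by (rule H2)
    also have "\<dots> \<le> (n+1)*(r2*S) + n*(k-1)*X*(r1*r2)"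
      using i2 e n k X by (intro add_mono mult_left_mono) auto
    finally show ?thesis by (simp add: p_def algebra_simps)
  qed
  hence "((1+n*k)*(q-S))*r2 \<le> (n*(k-1)*(p-S))*r2" by (simp add: algebra_simps)
  hence h2: "(1+n*k)*(q-S) \<le> n*(k-1)*(p-S)" using r2 mult_le_cancel_right_pos by blast
  from lin_core[OF n k h1 h2] have pS: "p \<le> S" and qS: "q \<le> S" by auto
  have "X * I1 \<le> X * (r1 * S)" using i1 X by simp
  also have "\<dots> = p * S" by (simp add: p_def)
  also have "\<dots> \<le> S * S" using mult_right_mono[OF pS S(1)] by simp
  finally have g1: "X * I1 \<le> A" using S by simp
  have "Y * I2 \<le> Y * (r2 * S)" using i2 Y by simp
  also have "\<dots> = q * S" by (simp add: q_def)
  also have "\<dots> \<le> S * S" using mult_right_mono[OF qS S(1)] by simp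
  finally have g2: "Y * I2 \<le> A" using S by simp
  have "S \<le> r1" using A1 by (simp add: S_def r1_def)
  hence "X * r1 \<le> 1 * r1" using pS by (simp add: p_def)
  hence g3: "X \<le> 1" using r1 using mult_le_cancel_right_pos by blast
  have "S \<le> r2" using A2 by (simp add: S_def r2_def)
  hence "Y * r2 \<le> 1 * r2" using qS by (simp add: q_def)
  hence g4: "Y \<le> 1" using r2 using mult_le_cancel_right_pos by blast
  show ?thesis using g1 g2 g3 g4 by simp
qed



lemma fund_dom_eq:
  assumes "lattice_basis om1 om2"
  shows "fund_dom om1 om2 = {x. 0 \<le> (fst x * snd om2 - snd x * fst om2) / (fst om1 * snd om2 - snd om1 * fst om2)
      \<and> (fst x * snd om2 - snd x * fst om2) / (fst om1 * snd om2 - snd om1 * fst om2) < 1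
      \<and> 0 \<le> (fst om1 * snd x - snd om1 * fst x) / (fst om1 * snd om2 - snd om1 * fst om2)
      \<and> (fst om1 * snd x - snd om1 * fst x) / (fst om1 * snd om2 - snd om1 * fst om2) < 1}"
    (is "_ = ?R")
proof -
  obtain a b where om1: "om1 = (a,b)" by force
  obtain c d where om2: "om2 = (c,d)" by force
  have det: "a*d - b*c \<noteq> 0" using assms om1 om2 by (simp add: lattice_basis_def)
  show ?thesis
  proof (intro set_eqI iffI)
    fix x assume "x \<in> fund_dom om1 om2"
    then obtain s t where x: "x = s *\<^sub>R om1 + t *\<^sub>R om2" and st: "0 \<le> s" "s < 1" "0 \<le> t" "t < 1"
      by (auto simp: fund_dom_def)
    have e1: "(fst x * d - snd x * c) / (a*d - b*c) = s" using det
      by (simp add: x om1 om2 field_simps)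
    have e2: "(a * snd x - b * fst x) / (a*d - b*c) = t" using det
      by (simp add: x om1 om2 field_simps)
    show "x \<in> ?R" using e1 e2 st by (simp add: om1 om2)
  next
    fix x assume xR: "x \<in> ?R"
    define s where "s = (fst x * d - snd x * c) / (a*d - b*c)"
    define t where "t = (a * snd x - b * fst x) / (a*d - b*c)"
    have n1: "(fst x * d - snd x * c) * a + (a * snd x - b * fst x) * c = fst x * (a*d - b*c)"
      by (simp add: algebra_simps)
    have n2: "(fst x * d - snd x * c) * b + (a * snd x - b * fst x) * d = snd x * (a*d - b*c)"
      by (simp add: algebra_simps)
    have f1: "s * a + t * c = fst x"
      unfolding s_def t_def using det n1
      by (simp add: divide_simps)
    have f2: "s * b + t * d = snd x"
      unfolding s_def t_def using det n2
      by (simp add: divide_simps)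
    have "x = s *\<^sub>R om1 + t *\<^sub>R om2"
      using f1 f2 by (simp add: prod_eq_iff om1 om2)
    moreover have "0 \<le> s \<and> s < 1 \<and> 0 \<le> t \<and> t < 1" using xR by (simp add: om1 om2 s_def t_def)
    ultimately show "x \<in> fund_dom om1 om2" unfolding fund_dom_def by blast
  qed
qed

lemma fund_dom_lmeasurable:
  assumes "lattice_basis om1 om2"
  shows "fund_dom om1 om2 \<in> lmeasurable"
proof (rule bounded_set_imp_lmeasurable)
  show "bounded (fund_dom om1 om2)"
    unfolding bounded_iff
  proof (intro exI ballI)
    fix x assume "x \<in> fund_dom om1 om2"
    then obtain s t where x: "x = s *\<^sub>R om1 + t *\<^sub>R om2" and st: "0 \<le> s" "s < 1" "0 \<le> t" "t < 1"
      by (auto simp: fund_dom_def)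
    have "norm x \<le> norm (s *\<^sub>R om1) + norm (t *\<^sub>R om2)" unfolding x by (rule norm_triangle_ineq)
    also have "\<dots> \<le> norm om1 + norm om2" using st
      by (intro add_mono) (auto intro!: mult_left_le_one_le)
    finally show "norm x \<le> norm om1 + norm om2" .
  qed
  define h1 where "h1 = (\<lambda>x::real\<times>real. (fst x * snd om2 - snd x * fst om2) / (fst om1 * snd om2 - snd om1 * fst om2))"
  define h2 where "h2 = (\<lambda>x::real\<times>real. (fst om1 * snd x - snd om1 * fst x) / (fst om1 * snd om2 - snd om1 * fst om2))"
  have c1: "continuous_on UNIV h1" using assms unfolding h1_def lattice_basis_def by (intro continuous_intros) auto
  have c2: "continuous_on UNIV h2" using assms unfolding h2_def lattice_basis_def by (intro continuous_intros) auto
  have "{x. 0 \<le> h1 x} \<inter> ({x. h1 x < 1} \<inter> ({x. 0 \<le> h2 x} \<inter> {x. h2 x < 1})) \<in> sets borel"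
    by (intro sets.Int borel_closed borel_open closed_Collect_le open_Collect_less c1 c2 continuous_on_const)
  then have "fund_dom om1 om2 \<in> sets borel"
    unfolding fund_dom_eq[OF assms] h1_def h2_def Collect_conj_eq by simp
  then show "fund_dom om1 om2 \<in> sets lebesgue"
    by (metis sets_lborel sets_completionI_sets)
qed



lemma cs_int:
  fixes f g :: "'a \<Rightarrow> real"
  assumes fm: "f \<in> borel_measurable M" and gm: "g \<in> borel_measurable M"
    and fi: "integrable M (\<lambda>x. (f x)\<^sup>2)" and gi: "integrable M (\<lambda>x. (g x)\<^sup>2)"
    and pos: "integral\<^sup>L M (\<lambda>x. (f x)\<^sup>2) > 0"
  shows "(integral\<^sup>L M (\<lambda>x. f x * g x))\<^sup>2 \<le> integral\<^sup>L M (\<lambda>x. (f x)\<^sup>2) * integral\<^sup>L M (\<lambda>x. (g x)\<^sup>2)"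
    and "integrable M (\<lambda>x. f x * g x)"
proof -
  show fgi: "integrable M (\<lambda>x. f x * g x)"
  proof (rule Bochner_Integration.integrable_bound[OF Bochner_Integration.integrable_add[OF fi gi]])
    show "(\<lambda>x. f x * g x) \<in> borel_measurable M" using fm gm by measurable
    show "AE x in M. norm (f x * g x) \<le> norm ((f x)\<^sup>2 + (g x)\<^sup>2)"
    proof
      fix x
      have "2 * \<bar>f x * g x\<bar> \<le> (f x)\<^sup>2 + (g x)\<^sup>2"
      proof -
        have "0 \<le> (\<bar>f x\<bar> - \<bar>g x\<bar>)\<^sup>2" by simp
        then show ?thesis by (simp add: power2_eq_square abs_mult algebra_simps)
      qed
      then show "norm (f x * g x) \<le> norm ((f x)\<^sup>2 + (g x)\<^sup>2)" by simp
    qed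
  qed
  define J1 where "J1 = integral\<^sup>L M (\<lambda>x. (f x)\<^sup>2)"
  define J2 where "J2 = integral\<^sup>L M (\<lambda>x. (g x)\<^sup>2)"
  define E where "E = integral\<^sup>L M (\<lambda>x. f x * g x)"
  define t where "t = E / J1"
  have "0 \<le> integral\<^sup>L M (\<lambda>x. (t * f x - g x)\<^sup>2)" by simp
  also have "(\<lambda>x. (t * f x - g x)\<^sup>2) = (\<lambda>x. t\<^sup>2 * (f x)\<^sup>2 - (2*t) * (f x * g x) + (g x)\<^sup>2)"
    by (auto simp: power2_eq_square algebra_simps)
  also have "integral\<^sup>L M \<dots> = t\<^sup>2 * J1 - 2*t*E + J2"
    using fi gi fgi unfolding J1_def J2_def E_def by simp
  finally have "0 \<le> t\<^sup>2 * J1 - 2*t*E + J2" .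
  then have "0 \<le> J2 - E\<^sup>2/J1" using pos unfolding t_def J1_def[symmetric]
    by (simp add: power2_eq_square field_simps)
  then show "(integral\<^sup>L M (\<lambda>x. f x * g x))\<^sup>2 \<le> integral\<^sup>L M (\<lambda>x. (f x)\<^sup>2) * integral\<^sup>L M (\<lambda>x. (g x)\<^sup>2)"
    using pos unfolding J1_def[symmetric] J2_def[symmetric] E_def[symmetric]
    by (simp add: field_simps)
qed

lemma exp_sq: "(\<lambda>x. (exp (u x + w x :: real))\<^sup>2) = (\<lambda>x. exp (2 * u x + 2 * w x))"
proof
  fix x show "(exp (u x + w x))\<^sup>2 = exp (2 * u x + 2 * w x)"
    by (simp add: power2_eq_square flip: exp_add)
qed

lemma comp:
  fixes u w :: "'a \<Rightarrow> real"
  assumes fin: "finite_measure M" and ui: "integrable M u" and u0: "integral\<^sup>L M u = 0"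
    and wm: "w \<in> borel_measurable M" and w2: "integrable M (\<lambda>x. (w x)\<^sup>2)" and w0: "integral\<^sup>L M w = 0"
    and Jne: "integral\<^sup>L M (\<lambda>x. exp (2*u x + 2*w x)) \<noteq> 0"
  shows "integral\<^sup>L M (\<lambda>x. exp (2*u x + 2*w x)) > 0"
    and "measure M (space M) \<le> integral\<^sup>L M (\<lambda>x. exp (2*u x + 2*w x))"
    and "(integral\<^sup>L M (\<lambda>x. exp (u x + w x)))\<^sup>2 \<le> integral\<^sup>L M (\<lambda>x. exp (2*u x + 2*w x)) * measure M (space M)"
    and "0 \<le> integral\<^sup>L M (\<lambda>x. exp (u x + w x))"
    and "integrable M (\<lambda>x. exp (2*u x + 2*w x))"
    and "(\<lambda>x. exp (u x + w x)) \<in> borel_measurable M"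
proof -
  interpret finite_measure M by (rule fin)
  have wi: "integrable M w"
  proof (rule Bochner_Integration.integrable_bound[OF Bochner_Integration.integrable_add[OF integrable_const[of 1] w2]])
    show "w \<in> borel_measurable M" by (rule wm)
    show "AE x in M. norm (w x) \<le> norm (1 + (w x)\<^sup>2)"
    proof
      fix x
      have "\<bar>w x\<bar> \<le> 1 + (w x)\<^sup>2"
      proof (cases "\<bar>w x\<bar> \<le> 1")
        case True have "0 \<le> (w x)\<^sup>2" by simp
        with True show ?thesis by linarith
      next
        case False
        then have "\<bar>w x\<bar> * 1 \<le> \<bar>w x\<bar> * \<bar>w x\<bar>" by (intro mult_left_mono) auto
        then show ?thesis by (simp add: power2_eq_square)
      qed
      then show "norm (w x) \<le> norm (1 + (w x)\<^sup>2)" by simp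
    qed
  qed
  show Ji: "integrable M (\<lambda>x. exp (2*u x + 2*w x))"
    using Jne not_integrable_integral_eq by blast
  have um: "u \<in> borel_measurable M" using ui by (rule borel_measurable_integrable)
  show em: "(\<lambda>x. exp (u x + w x)) \<in> borel_measurable M" using um wm by measurable
  have "integral\<^sup>L M (\<lambda>x. 1 + (2*u x + 2*w x)) = measure M (space M)"
    using ui wi u0 w0 by simp
  moreover have "integral\<^sup>L M (\<lambda>x. 1 + (2*u x + 2*w x)) \<le> integral\<^sup>L M (\<lambda>x. exp (2*u x + 2*w x))"
    using ui wi Ji exp_ge_add_one_self by (intro integral_mono) auto
  ultimately show "measure M (space M) \<le> integral\<^sup>L M (\<lambda>x. exp (2*u x + 2*w x))" by simp
  have "0 \<le> integral\<^sup>L M (\<lambda>x. exp (2*u x + 2*w x))" by simp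
  then show Jp: "integral\<^sup>L M (\<lambda>x. exp (2*u x + 2*w x)) > 0" using Jne by linarith
  show "0 \<le> integral\<^sup>L M (\<lambda>x. exp (u x + w x))" by simp
  have "(integral\<^sup>L M (\<lambda>x. exp (u x + w x) * 1))\<^sup>2 \<le> integral\<^sup>L M (\<lambda>x. (exp (u x + w x))\<^sup>2) * integral\<^sup>L M (\<lambda>x. (1::real)\<^sup>2)"
    using Ji Jp by (intro cs_int(1) em) (auto simp: exp_sq)
  then show "(integral\<^sup>L M (\<lambda>x. exp (u x + w x)))\<^sup>2 \<le> integral\<^sup>L M (\<lambda>x. exp (2*u x + 2*w x)) * measure M (space M)"
    by (simp add: exp_sq)
qed


lemma ff_step:
  fixes a J P c X :: real
  assumes "a > 0" "J > 0" "c \<ge> 0" "P \<ge> 0" "X = (P + sqrt (P\<^sup>2 - c)) / (2 * a * J)"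
  shows "a * J * X \<le> P"
proof -
  have "sqrt (P\<^sup>2 - c) \<le> sqrt (P\<^sup>2)" using assms(3) by (intro real_sqrt_le_mono) simp
  also have "\<dots> = P" using assms(4) by simp
  finally have s: "sqrt (P\<^sup>2 - c) \<le> P" .
  have "2 * (a * J * X) = P + sqrt (P\<^sup>2 - c)" using assms(1,2,5) by simp
  with s show ?thesis by linarith
qed


theorem lemma2:
  fixes N n1 n2 :: nat and \<kappa> lam c1 c2 :: real and om1 om2 :: "real \<times> real"
    and p1 p2 :: "nat \<Rightarrow> real \<times> real" and u10 u20 w1 w2 :: "real \<times> real \<Rightarrow> real"
  assumes "N \<ge> 2" and "\<kappa> > 1" and "lam > 0"
    and "lattice_basis om1 om2"
    and "\<forall>s\<in>{1..n1}. p1 s \<in> fund_dom om1 om2"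
    and "\<forall>s\<in>{1..n2}. p2 s \<in> fund_dom om1 om2"
    and "vortex_potential om1 om2 n1 p1 u10"
    and "vortex_potential om1 om2 n2 p2 u20"
    and "dotW12 om1 om2 w1" and "dotW12 om1 om2 w2"
    and "(tint om1 om2 (\<lambda>x. exp (u10 x + w1 x)))\<^sup>2 \<ge>
           4 * (real N - 1 + \<kappa>) * bb1 N \<kappa> n1 n2 / ((real N)\<^sup>2 * lam)
             * tint om1 om2 (\<lambda>x. exp (2 * u10 x + 2 * w1 x))"
    and "(tint om1 om2 (\<lambda>x. exp (u20 x + w2 x)))\<^sup>2 \<ge>
           4 * (real N - 1) * (1 + (real N - 1) * \<kappa>) * bb2 N \<kappa> n1 n2 / ((real N)\<^sup>2 * lam)
             * tint om1 om2 (\<lambda>x. exp (2 * u20 x + 2 * w2 x))"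
    and "exp c1 = ff1 N \<kappa> lam (bb1 N \<kappa> n1 n2)
           (tint om1 om2 (\<lambda>x. exp (u10 x + w1 x)))
           (tint om1 om2 (\<lambda>x. exp (2 * u10 x + 2 * w1 x)))
           (tint om1 om2 (\<lambda>x. exp (u10 x + u20 x + w1 x + w2 x))) (exp c2)"
    and "exp c2 = ff2 N \<kappa> lam (bb2 N \<kappa> n1 n2)
           (tint om1 om2 (\<lambda>x. exp (u20 x + w2 x)))
           (tint om1 om2 (\<lambda>x. exp (2 * u20 x + 2 * w2 x)))
           (tint om1 om2 (\<lambda>x. exp (u10 x + u20 x + w1 x + w2 x))) (exp c1)"
  shows "exp c1 * tint om1 om2 (\<lambda>x. exp (u10 x + w1 x)) \<le> tarea om1 om2 \<and> exp c1 \<le> 1 \<and>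
         exp c2 * tint om1 om2 (\<lambda>x. exp (u20 x + w2 x)) \<le> tarea om1 om2 \<and> exp c2 \<le> 1"
  proof -
  let ?D = "fund_dom om1 om2"
  let ?M = "lebesgue_on ?D"
  have Dl: "?D \<in> lmeasurable" using assms(4) by (rule fund_dom_lmeasurable)
  have fin: "finite_measure ?M" using Dl by (rule finite_measure_lebesgue_on)
  have Aeq: "tarea om1 om2 = measure ?M (space ?M)"
    unfolding tarea_def using Dl by (simp add: measure_restrict_space)
  have u1: "integrable ?M u10" "integral\<^sup>L ?M u10 = 0"
    using assms(7) by (auto simp: vortex_potential_def tL1_def tint_def)
  have u2: "integrable ?M u20" "integral\<^sup>L ?M u20 = 0"
    using assms(8) by (auto simp: vortex_potential_def tL1_def tint_def)
  have w1: "w1 \<in> borel_measurable ?M" "integrable ?M (\<lambda>x. (w1 x)\<^sup>2)" "integral\<^sup>L ?M w1 = 0"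
    using assms(9) by (auto simp: dotW12_def W12_def tL2_def tint_def)
  have w2: "w2 \<in> borel_measurable ?M" "integrable ?M (\<lambda>x. (w2 x)\<^sup>2)" "integral\<^sup>L ?M w2 = 0"
    using assms(10) by (auto simp: dotW12_def W12_def tL2_def tint_def)
  define I1 where "I1 = tint om1 om2 (\<lambda>x. exp (u10 x + w1 x))"
  define I2 where "I2 = tint om1 om2 (\<lambda>x. exp (u20 x + w2 x))"
  define J1 where "J1 = tint om1 om2 (\<lambda>x. exp (2 * u10 x + 2 * w1 x))"
  define J2 where "J2 = tint om1 om2 (\<lambda>x. exp (2 * u20 x + 2 * w2 x))"
  define E where "E = tint om1 om2 (\<lambda>x. exp (u10 x + u20 x + w1 x + w2 x))"
  define A where "A = tarea om1 om2"
  define X where "X = exp c1"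
  define Y where "Y = exp c2"
  define n where "n = real N - 1"
  have n: "n \<ge> 1" using assms(1) by (simp add: n_def)
  have X: "X > 0" and Y: "Y > 0" by (auto simp: X_def Y_def)
  have b1: "bb1 N \<kappa> n1 n2 \<ge> 0" using assms(1,2) by (simp add: bb1_def)
  have b2: "bb2 N \<kappa> n1 n2 \<ge> 0" using assms(1,2) by (simp add: bb2_def)
  have eX: "X = ff1 N \<kappa> lam (bb1 N \<kappa> n1 n2) I1 J1 E Y"
    using assms(13) by (simp add: X_def Y_def I1_def J1_def E_def)
  have eY: "Y = ff2 N \<kappa> lam (bb2 N \<kappa> n1 n2) I2 J2 E X"
    using assms(14) by (simp add: X_def Y_def I2_def J2_def E_def)
  have J1ne: "J1 \<noteq> 0"
  proof
    assume "J1 = 0" then have "X = 0" using eX by (simp add: ff1_def Let_def)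
    with X show False by simp
  qed
  have J2ne: "J2 \<noteq> 0"
  proof
    assume "J2 = 0" then have "Y = 0" using eY by (simp add: ff2_def Let_def)
    with Y show False by simp
  qed
  note c1 = comp[OF fin u1 w1 J1ne[unfolded J1_def tint_def]]
  note c2 = comp[OF fin u2 w2 J2ne[unfolded J2_def tint_def]]
  have J1p: "J1 > 0" and A1: "A \<le> J1" and C1: "I1\<^sup>2 \<le> J1 * A" and I1: "I1 \<ge> 0"
    using c1(1-4) by (auto simp: J1_def I1_def A_def Aeq tint_def)
  have J2p: "J2 > 0" and A2: "A \<le> J2" and C2: "I2\<^sup>2 \<le> J2 * A" and I2: "I2 \<ge> 0"
    using c2(1-4) by (auto simp: J2_def I2_def A_def Aeq tint_def)
  have Ap: "A \<ge> 0" by (simp add: A_def Aeq)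
  have E: "E \<ge> 0" by (simp add: E_def tint_def)
  have Eeq: "(\<lambda>x. exp (u10 x + w1 x) * exp (u20 x + w2 x)) = (\<lambda>x. exp (u10 x + u20 x + w1 x + w2 x))"
    by (auto simp: algebra_simps simp flip: exp_add)
  have CE: "E\<^sup>2 \<le> J1 * J2"
    using cs_int(1)[OF c1(6) c2(6), unfolded exp_sq Eeq, OF c1(5) c2(5) c1(1)]
    by (simp add: E_def J1_def J2_def tint_def)
  have H1': "(real N - 1 + \<kappa>) * J1 * X \<le> real N * I1 + (\<kappa> - 1) * Y * E"
  proof (rule ff_step[where c = "4 * (real N - 1 + \<kappa>) * bb1 N \<kappa> n1 n2 / lam * J1"])
    show "0 < real N - 1 + \<kappa>" using assms(1,2) by simp
    show "0 < J1" by (rule J1p)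
    show "0 \<le> 4 * (real N - 1 + \<kappa>) * bb1 N \<kappa> n1 n2 / lam * J1"
      using assms(1,2,3) b1 J1p by simp
    show "0 \<le> real N * I1 + (\<kappa> - 1) * Y * E" using I1 E Y assms(2) by simp
    show "X = (real N * I1 + (\<kappa> - 1) * Y * E +
        sqrt ((real N * I1 + (\<kappa> - 1) * Y * E)\<^sup>2 - 4 * (real N - 1 + \<kappa>) * bb1 N \<kappa> n1 n2 / lam * J1)) /
       (2 * (real N - 1 + \<kappa>) * J1)"
      using eX by (simp add: ff1_def Let_def)
  qed
  have H1: "(n+\<kappa>)*J1*X \<le> (n+1)*I1 + (\<kappa>-1)*Y*E" using H1' by (simp add: n_def)
  have H2': "(1 / (real N - 1) + \<kappa>) * J2 * Y \<le> real N / (real N - 1) * I2 + (\<kappa> - 1) * X * E"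
  proof (rule ff_step[where c = "4 * (1 + (real N - 1) * \<kappa>) * bb2 N \<kappa> n1 n2 / ((real N - 1) * lam) * J2"])
    have "real N - 1 > 0" using assms(1) by simp
    then show "0 < 1 / (real N - 1) + \<kappa>" using assms(2) by (simp add: add_pos_pos)
    show "0 < J2" by (rule J2p)
    show "0 \<le> 4 * (1 + (real N - 1) * \<kappa>) * bb2 N \<kappa> n1 n2 / ((real N - 1) * lam) * J2"
      using assms(1,2,3) b2 J2p by simp
    show "0 \<le> real N / (real N - 1) * I2 + (\<kappa> - 1) * X * E" using I2 E X assms(1,2) by simp
    show "Y = (real N / (real N - 1) * I2 + (\<kappa> - 1) * X * E +
        sqrt ((real N / (real N - 1) * I2 + (\<kappa> - 1) * X * E)\<^sup>2 - 4 * (1 + (real N - 1) * \<kappa>) * bb2 N \<kappa> n1 n2 / ((real N - 1) * lam) * J2)) /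
       (2 * (1 / (real N - 1) + \<kappa>) * J2)"
      using eY by (simp add: ff2_def Let_def)
  qed
  have "n * ((1/n + \<kappa>) * J2 * Y) \<le> n * ((n+1)/n * I2 + (\<kappa> - 1) * X * E)"
    using H2' n by (intro mult_left_mono) (auto simp: n_def)
  moreover have "n * ((1/n + \<kappa>) * J2 * Y) = (1+n*\<kappa>)*J2*Y"
    using n by (simp add: field_simps)
  moreover have "n * ((n+1)/n * I2 + (\<kappa> - 1) * X * E) = (n+1)*I2 + n*(\<kappa>-1)*X*E"
    using n by (simp add: field_simps)
  ultimately have H2: "(1+n*\<kappa>)*J2*Y \<le> (n+1)*I2 + n*(\<kappa>-1)*X*E"
    by simp
  have "X * I1 \<le> A \<and> X \<le> 1 \<and> Y * I2 \<le> A \<and> Y \<le> 1"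
    by (rule alg_main[OF n assms(2) X Y J1p J2p Ap I1 I2 E H1 H2 C1 C2 CE A1 A2])
  then show ?thesis by (simp add: X_def Y_def I1_def I2_def A_def)
qed

end
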